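(* Let $X\in\{0,1\}$ be binary. Assume consistency $Y=Y_X$, conditional ignorability $(Y_0,Y_1)\perp X\mid\boldsymbol Z$, and positivity $0<P(X=1\mid\boldsymbol Z=\boldsymbol z)<1$ for all $\boldsymbol z$. Then $$\mathcal{CI}_X=e_{\mathrm{cond}}-e_{\mathrm{orig}}=2\,\mathbb E_{\boldsymbol Z}\Big(\mathbb V(X\mid\boldsymbol Z)\big[\mathbb E(Y_1\mid\boldsymbol Z)-\mathbb E(Y_0\mid\boldsymbol Z)\big]^2\Big).$$
   Context: Let $O=(Y,X,\boldsymbol Z)$ be a random vector with real outcome $Y$, $\mathbb E[Y^2]<\infty$, predictor/treatment $X$ and covariate vector $\boldsymbol Z$, and $f_0(x,\boldsymbol z)=\mathbb E(Y\mid X=x,\boldsymbol Z=\boldsymbol z)$. Let $(Y^{(a)},X^{(a)},\boldsymbol Z)$ have the law of $O$, and let $X^{(b)}$ be, conditionally on $\boldsymbol Z$, distributed as $X\mid\boldsymbol Z$ and conditionally independent of $(Y^{(a)},X^{(a)})$ given $\boldsymbol Z$. Define $e_{\mathrm{orig}}=\mathbb E[(Y^{(a)}-f_0(X^{(a)},\boldsymbol Z))^2]$, $e_{\mathrm{cond}}=\mathbb E[(Y^{(a)}-f_0(X^{(b)},\boldsymbol Z))^2]$ (assumed finite), and the Conditional Variable Importance Metric (CVIM) $\mathcal{CI}_X=e_{\mathrm{cond}}-e_{\mathrm{orig}}$. $Y_x$ denotes the potential outcome under $X=x$. *)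

theory Defs
  imports "HOL-Probability.Probability"
begin

definition sigma_gen :: "'a measure \<Rightarrow> 'b measure \<Rightarrow> ('a \<Rightarrow> 'b) \<Rightarrow> 'a measure" where
  "sigma_gen M N V = vimage_algebra (space M) V N"

definition cexp :: "'a measure \<Rightarrow> 'z measure \<Rightarrow> ('a \<Rightarrow> 'z) \<Rightarrow> ('a \<Rightarrow> real) \<Rightarrow> ('a \<Rightarrow> real)" where
  "cexp M N Z f = real_cond_exp M (sigma_gen M N Z) f"

definition cprob :: "'a measure \<Rightarrow> 'z measure \<Rightarrow> ('a \<Rightarrow> 'z) \<Rightarrow> ('a \<Rightarrow> 'u) \<Rightarrow> 'u set \<Rightarrow> ('a \<Rightarrow> real)" where
  "cprob M N Z U A = cexp M N Z (\<lambda>\<omega>. indicator A (U \<omega>))"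

definition cvar :: "'a measure \<Rightarrow> 'z measure \<Rightarrow> ('a \<Rightarrow> 'z) \<Rightarrow> ('a \<Rightarrow> real) \<Rightarrow> ('a \<Rightarrow> real)" where
  "cvar M N Z f = cexp M N Z (\<lambda>\<omega>. (f \<omega> - cexp M N Z f \<omega>)\<^sup>2)"

definition cond_indep ::
  "'a measure \<Rightarrow> 'z measure \<Rightarrow> ('a \<Rightarrow> 'z) \<Rightarrow> 'u measure \<Rightarrow> ('a \<Rightarrow> 'u) \<Rightarrow> 'v measure \<Rightarrow> ('a \<Rightarrow> 'v) \<Rightarrow> bool" where
  "cond_indep M N Z P U Q V \<longleftrightarrow>
     (\<forall>A\<in>sets P. \<forall>B\<in>sets Q. AE \<omega> in M.
        cexp M N Z (\<lambda>\<omega>. indicator A (U \<omega>) * indicator B (V \<omega>)) \<omega>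
          = cprob M N Z U A \<omega> * cprob M N Z V B \<omega>)"

definition cond_same_dist ::
  "'a measure \<Rightarrow> 'z measure \<Rightarrow> ('a \<Rightarrow> 'z) \<Rightarrow> 'u measure \<Rightarrow> ('a \<Rightarrow> 'u) \<Rightarrow> ('a \<Rightarrow> 'u) \<Rightarrow> bool" where
  "cond_same_dist M N Z P U V \<longleftrightarrow>
     (\<forall>A\<in>sets P. AE \<omega> in M. cprob M N Z U A \<omega> = cprob M N Z V A \<omega>)"

text \<open>f0 is a version of the regression function E(Y | X = x, Z = z)\<close>
definition is_regression ::
  "'a measure \<Rightarrow> 'z measure \<Rightarrow> ('a \<Rightarrow> real) \<Rightarrow> ('a \<Rightarrow> real) \<Rightarrow> ('a \<Rightarrow> 'z) \<Rightarrow> (real \<Rightarrow> 'z \<Rightarrow> real) \<Rightarrow> bool" where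
  "is_regression M N Y X Z f0 \<longleftrightarrow>
     (\<lambda>(x, z). f0 x z) \<in> borel_measurable (borel \<Otimes>\<^sub>M N) \<and>
     (AE \<omega> in M. f0 (X \<omega>) (Z \<omega>) = cexp M (borel \<Otimes>\<^sub>M N) (\<lambda>\<omega>. (X \<omega>, Z \<omega>)) Y \<omega>)"

end

theory Submission
  imports Defs
begin

lemma sfs:
  assumes "prob_space M" "Z \<in> measurable M N"
  shows "sigma_finite_subalgebra M (sigma_gen M N Z)"
proof -
  interpret prob_space M by fact
  have "subalgebra M (sigma_gen M N Z)"
    unfolding subalgebra_def sigma_gen_def
    using sets_image_in_sets[OF refl assms(2)] by simp
  then have "finite_measure_subalgebra M (sigma_gen M N Z)"
    by (simp add: finite_measure_subalgebra_def finite_measure_subalgebra_axioms_def finite_measure_axioms)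
  then show ?thesis by (rule finite_measure_subalgebra_is_sigma_finite)
qed

lemma Z_meas_F:
  assumes "Z \<in> measurable M N"
  shows "Z \<in> measurable (sigma_gen M N Z) N"
  unfolding sigma_gen_def using assms by (intro measurable_vimage_algebra1) (auto dest: measurable_space)

lemma ci_rect:
  assumes P: "prob_space M" and Zm: "Z \<in> measurable M N" and Um: "U \<in> measurable M P"
    and Vm: "V \<in> measurable M Q" and ci: "cond_indep M N Z P U Q V" and B: "B \<in> sets Q"
    and a: "a \<in> sets P" and c: "c \<in> sets N"
  shows "(\<integral>\<omega>. indicator c (Z \<omega>) * indicator a (U \<omega>) * indicator B (V \<omega>) \<partial>M)
       = (\<integral>\<omega>. indicator c (Z \<omega>) * indicator a (U \<omega>) * cprob M N Z V B \<omega> \<partial>M)"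
proof -
  interpret prob_space M by fact
  interpret S: sigma_finite_subalgebra M "sigma_gen M N Z" using sfs[OF P Zm] .
  let ?F = "sigma_gen M N Z"
  have ZF: "Z \<in> measurable ?F N" by (rule Z_meas_F[OF Zm])
  note [measurable] = Zm Um Vm a c B
  have cF[measurable]: "(\<lambda>\<omega>. indicator c (Z \<omega>) :: real) \<in> borel_measurable ?F"
    using ZF c by measurable
  let ?pA = "cprob M N Z U a" and ?q = "cprob M N Z V B"
  have qF[measurable]: "?q \<in> borel_measurable ?F" "?pA \<in> borel_measurable ?F"
    unfolding cprob_def cexp_def by auto
  have qM[measurable]: "?q \<in> borel_measurable M" "?pA \<in> borel_measurable M"
    unfolding cprob_def cexp_def by auto
  have qint: "integrable M ?q" "integrable M ?pA"
    unfolding cprob_def cexp_def by (auto intro!: S.real_cond_exp_int integrable_const_bound[where B=1])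
  have ae: "AE \<omega> in M. cexp M N Z (\<lambda>\<omega>. indicator a (U \<omega>) * indicator B (V \<omega>)) \<omega> = ?pA \<omega> * ?q \<omega>"
    using ci a B unfolding cond_indep_def by auto
  have "(\<integral>\<omega>. indicator c (Z \<omega>) * indicator a (U \<omega>) * indicator B (V \<omega>) \<partial>M)
      = (\<integral>\<omega>. indicator c (Z \<omega>) * (indicator a (U \<omega>) * indicator B (V \<omega>)) \<partial>M :: real)"
    by (simp only: mult.assoc)
  also have "\<dots> = (\<integral>\<omega>. indicator c (Z \<omega>) * cexp M N Z (\<lambda>\<omega>. indicator a (U \<omega>) * indicator B (V \<omega>)) \<omega> \<partial>M)"
    unfolding cexp_def
    by (rule S.real_cond_exp_intg(2)[symmetric, OF _ cF]) (auto intro!: integrable_const_bound[where B=1] simp: indicator_def)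
  also have "\<dots> = (\<integral>\<omega>. indicator c (Z \<omega>) * (?pA \<omega> * ?q \<omega>) \<partial>M)"
    by (rule integral_cong_AE) (use ae in \<open>auto simp: cexp_def cprob_def\<close>)
  also have "\<dots> = (\<integral>\<omega>. (indicator c (Z \<omega>) * ?q \<omega>) * ?pA \<omega> \<partial>M)"
    by (simp add: ac_simps)
  also have "\<dots> = (\<integral>\<omega>. (indicator c (Z \<omega>) * ?q \<omega>) * indicator a (U \<omega>) \<partial>M)"
    unfolding cprob_def cexp_def
  proof (rule S.real_cond_exp_intg(2))
    show "integrable M (\<lambda>x. indicator c (Z x) * real_cond_exp M (sigma_gen M N Z) (\<lambda>\<omega>. indicator B (V \<omega>)) x * indicator a (U x))"
      apply (rule Bochner_Integration.integrable_bound[OF qint(1)[unfolded cprob_def cexp_def]])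
      apply (intro borel_measurable_times qM(1)[unfolded cprob_def cexp_def])
        apply measurable[2]
      by (intro AE_I2) (auto simp: indicator_def)
  qed (rule borel_measurable_times[OF cF borel_measurable_cond_exp], measurable)
  finally show ?thesis by (simp add: ac_simps)
qed

lemma ci_nn:
  assumes P: "prob_space M" and Zm: "Z \<in> measurable M N" and Um: "U \<in> measurable M P"
    and Vm: "V \<in> measurable M Q" and ci: "cond_indep M N Z P U Q V" and B: "B \<in> sets Q"
    and g: "g \<in> borel_measurable (P \<Otimes>\<^sub>M N)"
  shows "(\<integral>\<^sup>+\<omega>. ennreal (g (U \<omega>, Z \<omega>)) * indicator B (V \<omega>) \<partial>M)
       = (\<integral>\<^sup>+\<omega>. ennreal (g (U \<omega>, Z \<omega>)) * ennreal (cprob M N Z V B \<omega>) \<partial>M)"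
proof -
  interpret prob_space M by fact
  interpret S: sigma_finite_subalgebra M "sigma_gen M N Z" using sfs[OF P Zm] .
  let ?q = "cprob M N Z V B"
  note [measurable] = Zm Um Vm B g
  have qM[measurable]: "?q \<in> borel_measurable M" unfolding cprob_def cexp_def by simp
  have qpos: "AE \<omega> in M. 0 \<le> ?q \<omega>" unfolding cprob_def cexp_def
    by (rule S.real_cond_exp_pos) auto
  let ?W = "\<lambda>\<omega>. (U \<omega>, Z \<omega>)"
  have Wm[measurable]: "?W \<in> measurable M (P \<Otimes>\<^sub>M N)" by measurable
  define M1 where "M1 = density M (\<lambda>\<omega>. indicator B (V \<omega>) :: ennreal)"
  define M2 where "M2 = density M (\<lambda>\<omega>. ennreal (?q \<omega>))"
  let ?E = "{a \<times> b |a b. a \<in> sets P \<and> b \<in> sets N}"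
  have eq: "distr M1 (P \<Otimes>\<^sub>M N) ?W = distr M2 (P \<Otimes>\<^sub>M N) ?W"
  proof (rule measure_eqI_generator_eq[OF Int_stable_pair_measure_generator[of P N], where A="\<lambda>_. space P \<times> space N"])
    show "?E \<subseteq> Pow (space P \<times> space N)"
      by (auto dest: sets.sets_into_space)
    show "sets (distr M1 (P \<Otimes>\<^sub>M N) ?W) = sigma_sets (space P \<times> space N) ?E"
      by (simp add: sets_pair_measure)
    show "sets (distr M2 (P \<Otimes>\<^sub>M N) ?W) = sigma_sets (space P \<times> space N) ?E"
      by (simp add: sets_pair_measure)
    show "range (\<lambda>i. space P \<times> space N) \<subseteq> ?E" by auto
    show "(\<Union>i. space P \<times> space N) = space P \<times> space N" by simp
    have "emeasure (distr M1 (P \<Otimes>\<^sub>M N) ?W) (space P \<times> space N) = emeasure M1 (?W -` (space P \<times> space N) \<inter> space M)"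
      unfolding M1_def by (subst emeasure_distr) (auto simp: space_pair_measure)
    also have "\<dots> = (\<integral>\<^sup>+\<omega>. indicator B (V \<omega>) * indicator (?W -` (space P \<times> space N) \<inter> space M) \<omega> \<partial>M)"
      unfolding M1_def by (subst emeasure_density) (auto simp: space_pair_measure)
    also have "\<dots> \<le> (\<integral>\<^sup>+\<omega>. 1 \<partial>M)"
      by (intro nn_integral_mono) (auto simp: indicator_def)
    also have "\<dots> < \<infinity>" using emeasure_space_1 by simp
    finally show "\<And>i. emeasure (distr M1 (P \<Otimes>\<^sub>M N) ?W) (space P \<times> space N) \<noteq> \<infinity>" by simp
  next
    fix X assume "X \<in> ?E"
    then obtain a c where X: "X = a \<times> c" and a[measurable]: "a \<in> sets P" and c[measurable]: "c \<in> sets N" by auto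
    have pre: "\<And>\<omega>. \<omega> \<in> space M \<Longrightarrow> indicator (?W -` X \<inter> space M) \<omega> = (indicator c (Z \<omega>) * indicator a (U \<omega>) :: ennreal)"
      by (auto simp: X indicator_def)
    have "emeasure (distr M1 (P \<Otimes>\<^sub>M N) ?W) X = emeasure M1 (?W -` X \<inter> space M)"
      unfolding M1_def X by (subst emeasure_distr) auto
    also have "\<dots> = (\<integral>\<^sup>+\<omega>. indicator B (V \<omega>) * indicator (?W -` X \<inter> space M) \<omega> \<partial>M)"
      unfolding M1_def X by (subst emeasure_density) auto
    also have "\<dots> = (\<integral>\<^sup>+\<omega>. ennreal (indicator c (Z \<omega>) * indicator a (U \<omega>) * indicator B (V \<omega>)) \<partial>M)"
      by (intro nn_integral_cong) (auto simp: X indicator_def)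
    also have "\<dots> = ennreal (\<integral>\<omega>. indicator c (Z \<omega>) * indicator a (U \<omega>) * indicator B (V \<omega>) \<partial>M)"
      by (intro nn_integral_eq_integral integrable_const_bound[where B=1]) (auto simp: indicator_def)
    also have "\<dots> = ennreal (\<integral>\<omega>. indicator c (Z \<omega>) * indicator a (U \<omega>) * ?q \<omega> \<partial>M)"
      using ci_rect[OF P Zm Um Vm ci B a c] by simp
    also have "\<dots> = (\<integral>\<^sup>+\<omega>. ennreal (indicator c (Z \<omega>) * indicator a (U \<omega>) * ?q \<omega>) \<partial>M)"
    proof (rule nn_integral_eq_integral[symmetric])
      have qint: "integrable M ?q" unfolding cprob_def cexp_def
        by (auto intro!: S.real_cond_exp_int integrable_const_bound[where B=1] simp: indicator_def)
      show "integrable M (\<lambda>\<omega>. indicator c (Z \<omega>) * indicator a (U \<omega>) * ?q \<omega>)"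
        apply (rule Bochner_Integration.integrable_bound[OF qint])
         apply measurable
        by (intro AE_I2) (auto simp: indicator_def)
      show "AE \<omega> in M. 0 \<le> indicator c (Z \<omega>) * indicator a (U \<omega>) * ?q \<omega>"
        using qpos by eventually_elim auto
    qed
    also have "\<dots> = (\<integral>\<^sup>+\<omega>. ennreal (?q \<omega>) * indicator (?W -` X \<inter> space M) \<omega> \<partial>M)"
      by (intro nn_integral_cong) (auto simp: X indicator_def)
    also have "\<dots> = emeasure (distr M2 (P \<Otimes>\<^sub>M N) ?W) X"
      unfolding M2_def X by (subst emeasure_distr) (auto simp: emeasure_density)
    finally show "emeasure (distr M1 (P \<Otimes>\<^sub>M N) ?W) X = emeasure (distr M2 (P \<Otimes>\<^sub>M N) ?W) X" .
  qed
  have "(\<integral>\<^sup>+\<omega>. ennreal (g (U \<omega>, Z \<omega>)) * indicator B (V \<omega>) \<partial>M)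
      = (\<integral>\<^sup>+\<omega>. indicator B (V \<omega>) * ennreal (g (?W \<omega>)) \<partial>M)" by (simp add: mult.commute)
  also have "\<dots> = (\<integral>\<^sup>+\<omega>. ennreal (g (?W \<omega>)) \<partial>M1)"
    unfolding M1_def by (subst nn_integral_density) auto
  also have "\<dots> = (\<integral>\<^sup>+x. ennreal (g x) \<partial>distr M1 (P \<Otimes>\<^sub>M N) ?W)"
    unfolding M1_def by (subst nn_integral_distr) auto
  also have "\<dots> = (\<integral>\<^sup>+x. ennreal (g x) \<partial>distr M2 (P \<Otimes>\<^sub>M N) ?W)" by (simp only: eq)
  also have "\<dots> = (\<integral>\<^sup>+\<omega>. ennreal (g (?W \<omega>)) \<partial>M2)"
    unfolding M2_def by (subst nn_integral_distr) auto
  also have "\<dots> = (\<integral>\<^sup>+\<omega>. ennreal (?q \<omega>) * ennreal (g (?W \<omega>)) \<partial>M)"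
    unfolding M2_def by (subst nn_integral_density) auto
  finally show ?thesis by (simp add: mult.commute)
qed

lemma ci_int_nonneg:
  assumes P: "prob_space M" and Zm: "Z \<in> measurable M N" and Um: "U \<in> measurable M P"
    and Vm: "V \<in> measurable M Q" and ci: "cond_indep M N Z P U Q V" and B: "B \<in> sets Q"
    and g: "g \<in> borel_measurable (P \<Otimes>\<^sub>M N)" and gpos: "\<And>x. 0 \<le> g x"
    and gi: "integrable M (\<lambda>\<omega>. g (U \<omega>, Z \<omega>) * indicator B (V \<omega>))"
  shows "integrable M (\<lambda>\<omega>. g (U \<omega>, Z \<omega>) * cprob M N Z V B \<omega>)"
    and "(\<integral>\<omega>. g (U \<omega>, Z \<omega>) * indicator B (V \<omega>) \<partial>M) = (\<integral>\<omega>. g (U \<omega>, Z \<omega>) * cprob M N Z V B \<omega> \<partial>M)"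
proof -
  interpret prob_space M by fact
  interpret S: sigma_finite_subalgebra M "sigma_gen M N Z" using sfs[OF P Zm] .
  let ?q = "cprob M N Z V B"
  note [measurable] = Zm Um Vm B g
  have qM[measurable]: "?q \<in> borel_measurable M" unfolding cprob_def cexp_def by simp
  have qpos: "AE \<omega> in M. 0 \<le> ?q \<omega>" unfolding cprob_def cexp_def
    by (rule S.real_cond_exp_pos) auto
  have "(\<integral>\<^sup>+\<omega>. ennreal (g (U \<omega>, Z \<omega>) * indicator B (V \<omega>)) \<partial>M)
      = (\<integral>\<^sup>+\<omega>. ennreal (g (U \<omega>, Z \<omega>)) * indicator B (V \<omega>) \<partial>M)"
    by (intro nn_integral_cong) (auto simp: indicator_def)
  also have "\<dots> = (\<integral>\<^sup>+\<omega>. ennreal (g (U \<omega>, Z \<omega>)) * ennreal (?q \<omega>) \<partial>M)"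
    by (rule ci_nn[OF P Zm Um Vm ci B g])
  also have "\<dots> = (\<integral>\<^sup>+\<omega>. ennreal (g (U \<omega>, Z \<omega>) * ?q \<omega>) \<partial>M)"
    by (intro nn_integral_cong_AE) (use qpos in \<open>eventually_elim, simp add: ennreal_mult gpos\<close>)
  finally have nn: "(\<integral>\<^sup>+\<omega>. ennreal (g (U \<omega>, Z \<omega>) * indicator B (V \<omega>)) \<partial>M)
      = (\<integral>\<^sup>+\<omega>. ennreal (g (U \<omega>, Z \<omega>) * ?q \<omega>) \<partial>M)" .
  have fin: "(\<integral>\<^sup>+\<omega>. ennreal (g (U \<omega>, Z \<omega>) * indicator B (V \<omega>)) \<partial>M) < \<infinity>"
    using gi by (simp add: nn_integral_eq_integral gpos)
  show int2: "integrable M (\<lambda>\<omega>. g (U \<omega>, Z \<omega>) * ?q \<omega>)"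
    by (rule integrableI_nonneg) (use qpos fin nn in \<open>auto intro: gpos simp: zero_le_mult_iff\<close>)
  have "ennreal (\<integral>\<omega>. g (U \<omega>, Z \<omega>) * indicator B (V \<omega>) \<partial>M) = ennreal (\<integral>\<omega>. g (U \<omega>, Z \<omega>) * ?q \<omega> \<partial>M)"
    using nn gi int2 qpos
    by (subst (asm) (1 2) nn_integral_eq_integral) (auto simp: gpos)
  moreover have "0 \<le> (\<integral>\<omega>. g (U \<omega>, Z \<omega>) * indicator B (V \<omega>) \<partial>M)"
    by (intro integral_nonneg_AE AE_I2) (auto simp: gpos)
  moreover have "0 \<le> (\<integral>\<omega>. g (U \<omega>, Z \<omega>) * ?q \<omega> \<partial>M)"
    by (intro integral_nonneg_AE) (use qpos in \<open>eventually_elim, simp add: gpos\<close>)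
  ultimately show "(\<integral>\<omega>. g (U \<omega>, Z \<omega>) * indicator B (V \<omega>) \<partial>M) = (\<integral>\<omega>. g (U \<omega>, Z \<omega>) * ?q \<omega> \<partial>M)"
    by simp
qed

lemma ci_int:
  assumes P: "prob_space M" and Zm: "Z \<in> measurable M N" and Um: "U \<in> measurable M P"
    and Vm: "V \<in> measurable M Q" and ci: "cond_indep M N Z P U Q V" and B: "B \<in> sets Q"
    and g: "g \<in> borel_measurable (P \<Otimes>\<^sub>M N)"
    and gi: "integrable M (\<lambda>\<omega>. g (U \<omega>, Z \<omega>) * indicator B (V \<omega>))"
  shows "integrable M (\<lambda>\<omega>. g (U \<omega>, Z \<omega>) * cprob M N Z V B \<omega>)"
    and "(\<integral>\<omega>. g (U \<omega>, Z \<omega>) * indicator B (V \<omega>) \<partial>M) = (\<integral>\<omega>. g (U \<omega>, Z \<omega>) * cprob M N Z V B \<omega> \<partial>M)"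
proof -
  note [measurable] = Zm Um Vm B g
  define gp where "gp = (\<lambda>x. max 0 (g x))"
  define gm where "gm = (\<lambda>x. max 0 (- g x))"
  have gpM[measurable]: "gp \<in> borel_measurable (P \<Otimes>\<^sub>M N)" and gmM[measurable]: "gm \<in> borel_measurable (P \<Otimes>\<^sub>M N)"
    unfolding gp_def gm_def by measurable
  have ip: "integrable M (\<lambda>\<omega>. gp (U \<omega>, Z \<omega>) * indicator B (V \<omega>))"
    by (rule Bochner_Integration.integrable_bound[OF gi]) (auto simp: gp_def indicator_def)
  have im: "integrable M (\<lambda>\<omega>. gm (U \<omega>, Z \<omega>) * indicator B (V \<omega>))"
    by (rule Bochner_Integration.integrable_bound[OF gi]) (auto simp: gm_def indicator_def)
  have gpn: "\<And>x. 0 \<le> gp x" and gmn: "\<And>x. 0 \<le> gm x" by (auto simp: gp_def gm_def)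
  note p = ci_int_nonneg[OF P Zm Um Vm ci B gpM gpn ip] and m = ci_int_nonneg[OF P Zm Um Vm ci B gmM gmn im]
  have pm: "\<And>x. g x = gp x - gm x" by (auto simp: gp_def gm_def)
  have e1: "(\<lambda>\<omega>. g (U \<omega>, Z \<omega>) * cprob M N Z V B \<omega>) =
     (\<lambda>\<omega>. gp (U \<omega>, Z \<omega>) * cprob M N Z V B \<omega> - gm (U \<omega>, Z \<omega>) * cprob M N Z V B \<omega>)"
    by (simp add: pm left_diff_distrib)
  have e2: "(\<lambda>\<omega>. g (U \<omega>, Z \<omega>) * indicator B (V \<omega>)) =
     (\<lambda>\<omega>. gp (U \<omega>, Z \<omega>) * indicator B (V \<omega>) - gm (U \<omega>, Z \<omega>) * indicator B (V \<omega>))"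
    by (simp add: pm left_diff_distrib)
  show "integrable M (\<lambda>\<omega>. g (U \<omega>, Z \<omega>) * cprob M N Z V B \<omega>)"
    unfolding e1 by (intro Bochner_Integration.integrable_diff p(1) m(1))
  show "(\<integral>\<omega>. g (U \<omega>, Z \<omega>) * indicator B (V \<omega>) \<partial>M) = (\<integral>\<omega>. g (U \<omega>, Z \<omega>) * cprob M N Z V B \<omega> \<partial>M)"
    unfolding e1 e2
    using p m ip im by (subst (1 2) Bochner_Integration.integral_diff) auto
qed

lemma ci_sym:
  assumes "cond_indep M N Z P U Q V"
  shows "cond_indep M N Z Q V P U"
  unfolding cond_indep_def
proof (intro ballI)
  fix A B assume A: "A \<in> sets Q" and B: "B \<in> sets P"
  have e: "(\<lambda>\<omega>. indicator A (V \<omega>) * indicator B (U \<omega>)) = (\<lambda>\<omega>. indicator B (U \<omega>) * (indicator A (V \<omega>) :: real))"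
    by (simp add: mult.commute)
  from assms B A have "AE \<omega> in M. cexp M N Z (\<lambda>\<omega>. indicator B (U \<omega>) * indicator A (V \<omega>)) \<omega>
          = cprob M N Z U B \<omega> * cprob M N Z V A \<omega>"
    unfolding cond_indep_def by auto
  then show "AE \<omega> in M. cexp M N Z (\<lambda>\<omega>. indicator A (V \<omega>) * indicator B (U \<omega>)) \<omega>
          = cprob M N Z V A \<omega> * cprob M N Z U B \<omega>"
    unfolding e by (simp add: mult.commute)
qed

lemma sq_ineq1: "((a::real) - b)^2 \<le> 2*a^2 + 2*b^2"
proof -
  have "0 \<le> (a + b)^2" by simp
  then show ?thesis by (simp add: power2_eq_square algebra_simps)
qed

lemma sq_ineq2: "((a::real) + b)^2 \<le> 2*a^2 + 2*b^2"
  using sq_ineq1[of a "-b"] by simp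

lemma ab_ineq: "\<bar>(a::real) * b\<bar> \<le> a^2 + b^2"
proof -
  have "2 * \<bar>a\<bar> * \<bar>b\<bar> \<le> a^2 + b^2"
    using zero_le_square[of "\<bar>a\<bar> - \<bar>b\<bar>"] by (simp add: power2_eq_square algebra_simps)
  moreover have "0 \<le> \<bar>a\<bar> * \<bar>b\<bar>" by simp
  ultimately show ?thesis unfolding abs_mult by linarith
qed

lemma yw_ineq:
  assumes "0 \<le> (q::real)" "q \<le> 1" "i \<in> {0,1::real}"
  shows "\<bar>y * (i * d * q)\<bar> \<le> y^2 + i * d^2 * q"
proof (cases "i = 0")
  case True then show ?thesis by simp
next
  case False
  then have i: "i = 1" using assms by auto
  have "2 * \<bar>y\<bar> * \<bar>d\<bar> \<le> y^2 + d^2"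
    using zero_le_square[of "\<bar>y\<bar> - \<bar>d\<bar>"] by (simp add: power2_eq_square algebra_simps)
  then have "2 * \<bar>y\<bar> * \<bar>d\<bar> * q \<le> (y^2 + d^2) * q" using assms by (intro mult_right_mono) auto
  moreover have "y^2 * q \<le> y^2" using assms by (simp add: mult_left_le)
  moreover have "0 \<le> \<bar>y\<bar> * \<bar>d\<bar> * q" using assms by simp
  ultimately have "\<bar>y\<bar> * \<bar>d\<bar> * q \<le> y^2 + d^2 * q" by (simp add: algebra_simps)
  then show ?thesis using i assms by (simp add: abs_mult mult.assoc)
qed

lemma abs_mult_le1: "\<bar>(c::real)\<bar> \<le> 1 \<Longrightarrow> \<bar>c * x\<bar> \<le> \<bar>x\<bar>"
  by (simp add: abs_mult mult_left_le_one_le)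

lemma swap_lem: "(x::real) * (1 - x) = y * (1 - y) \<Longrightarrow> d * (1 - x) * x = y * (1 - y) * d"
proof -
  assume h: "x * (1 - x) = y * (1 - y)"
  have "d * (1 - x) * x = d * (x * (1 - x))" by (simp add: ac_simps)
  also have "\<dots> = y * (1 - y) * d" using h by simp
  finally show ?thesis .
qed

lemma cexp_sq_int:
  assumes "sigma_finite_subalgebra M F" "prob_space M"
    and "f \<in> borel_measurable M" "integrable M (\<lambda>x. (f x)^2)"
  shows "integrable M (\<lambda>x. (real_cond_exp M F f x)^2)"
proof -
  interpret sigma_finite_subalgebra M F by fact
  interpret prob_space M by fact
  have fi: "integrable M f" using assms(3,4) by (rule square_integrable_imp_integrable)
  show ?thesis
    using integrable_convex_cond_exp[OF fi, of UNIV 0 0 power2] assms(4) convex_power2 by auto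
qed

theorem theorem3:
  fixes M :: "'a measure" and N :: "'z measure"
    and Y Y0 Y1 X Xb :: "'a \<Rightarrow> real" and Z :: "'a \<Rightarrow> 'z"
    and f0 :: "real \<Rightarrow> 'z \<Rightarrow> real"
  assumes "prob_space M"
    and "Z \<in> measurable M N"
    and "X \<in> borel_measurable M" and "Y \<in> borel_measurable M"
    and "Y0 \<in> borel_measurable M" and "Y1 \<in> borel_measurable M"
    and "Xb \<in> borel_measurable M"
    and binary: "\<forall>\<omega>\<in>space M. X \<omega> \<in> {0, 1}"
    and binary_b: "\<forall>\<omega>\<in>space M. Xb \<omega> \<in> {0, 1}"
    and Y_sq: "integrable M (\<lambda>\<omega>. (Y \<omega>)\<^sup>2)"
    and Y0_int: "integrable M Y0" and Y1_int: "integrable M Y1"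
    and consistency: "AE \<omega> in M. Y \<omega> = (if X \<omega> = 1 then Y1 \<omega> else Y0 \<omega>)"
    and ignorability: "cond_indep M N Z (borel :: (real \<times> real) measure) (\<lambda>\<omega>. (Y0 \<omega>, Y1 \<omega>)) borel X"
    and positivity: "AE \<omega> in M. 0 < cprob M N Z X {1} \<omega> \<and> cprob M N Z X {1} \<omega> < 1"
    and f0: "is_regression M N Y X Z f0"
    and Xb_dist: "cond_same_dist M N Z borel Xb X"
    and Xb_indep: "cond_indep M N Z borel Xb (borel :: (real \<times> real) measure) (\<lambda>\<omega>. (Y \<omega>, X \<omega>))"
    and e_cond_finite: "integrable M (\<lambda>\<omega>. (Y \<omega> - f0 (Xb \<omega>) (Z \<omega>))\<^sup>2)"
  shows "(\<integral>\<omega>. (Y \<omega> - f0 (Xb \<omega>) (Z \<omega>))\<^sup>2 \<partial>M) - (\<integral>\<omega>. (Y \<omega> - f0 (X \<omega>) (Z \<omega>))\<^sup>2 \<partial>M)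
         = 2 * (\<integral>\<omega>. cvar M N Z X \<omega> * (cexp M N Z Y1 \<omega> - cexp M N Z Y0 \<omega>)\<^sup>2 \<partial>M)"
proof -
  note P = assms(1) and Zm = assms(2) and Xm = assms(3) and Ym = assms(4)
    and Y0m = assms(5) and Y1m = assms(6) and Xbm = assms(7)
  interpret prob_space M by fact
  define F where "F = sigma_gen M N Z"
  define G where "G = sigma_gen M (borel \<Otimes>\<^sub>M N) (\<lambda>\<omega>. (X \<omega>, Z \<omega>))"
  note [measurable] = Zm Xm Ym Y0m Y1m Xbm
  have fstb[measurable]: "(\<lambda>x::real\<times>real. fst x) \<in> borel_measurable borel"
    by (intro borel_measurable_continuous_onI continuous_intros)
  have sndb[measurable]: "(\<lambda>x::real\<times>real. snd x) \<in> borel_measurable borel"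
    by (intro borel_measurable_continuous_onI continuous_intros)
  have XZm[measurable]: "(\<lambda>\<omega>. (X \<omega>, Z \<omega>)) \<in> measurable M (borel \<Otimes>\<^sub>M N)" by measurable
  interpret S: sigma_finite_subalgebra M F unfolding F_def by (rule sfs[OF P Zm])
  interpret SG: sigma_finite_subalgebra M G unfolding G_def by (rule sfs[OF P XZm])
  have f0m[measurable]: "(\<lambda>(x, z). f0 x z) \<in> borel_measurable (borel \<Otimes>\<^sub>M N)"
    using f0 unfolding is_regression_def by auto
  have f0reg: "AE \<omega> in M. f0 (X \<omega>) (Z \<omega>) = real_cond_exp M G Y \<omega>"
    using f0 unfolding is_regression_def cexp_def G_def sigma_gen_def by auto
  have f0c: "\<And>a. a \<in> borel_measurable M \<Longrightarrow> (\<lambda>\<omega>. f0 (a \<omega>) (Z \<omega>)) \<in> borel_measurable M"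
  proof -
    fix a :: "'a \<Rightarrow> real" assume a: "a \<in> borel_measurable M"
    have "(\<lambda>\<omega>. (a \<omega>, Z \<omega>)) \<in> measurable M (borel \<Otimes>\<^sub>M N)" using a Zm by measurable
    from measurable_compose[OF this f0m] show "(\<lambda>\<omega>. f0 (a \<omega>) (Z \<omega>)) \<in> borel_measurable M" by simp
  qed
  have f0N: "\<And>x. (\<lambda>z. f0 x z) \<in> borel_measurable N"
    using measurable_Pair2[OF f0m] by auto
  have ZF: "Z \<in> measurable F N" unfolding F_def by (rule Z_meas_F[OF Zm])
  have XZG: "(\<lambda>\<omega>. (X \<omega>, Z \<omega>)) \<in> measurable G (borel \<Otimes>\<^sub>M N)"
    unfolding G_def sigma_gen_def
    by (intro measurable_vimage_algebra1) (auto intro: measurable_space[OF XZm])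
  have ZG: "Z \<in> measurable G N" using measurable_snd'[OF XZG] by simp
  have XG: "X \<in> borel_measurable G" using measurable_fst'[OF XZG] by simp
  have idGF: "(\<lambda>x. x) \<in> measurable G F"
    unfolding F_def sigma_gen_def
    by (rule measurable_vimage_algebra2) (use ZG in \<open>auto simp: G_def sigma_gen_def\<close>)
  have FG: "\<And>h. h \<in> borel_measurable F \<Longrightarrow> h \<in> borel_measurable G"
    using measurable_compose[OF idGF] by auto
  have cexpF: "\<And>f. cexp M N Z f = real_cond_exp M F f" by (simp add: cexp_def F_def)
  have cprobF: "\<And>U A. cprob M N Z U A = real_cond_exp M F (\<lambda>\<omega>. indicator A (U \<omega>))"
    by (simp add: cprob_def cexpF)
  define p where "p = cprob M N Z X {1}"
  have pce: "p = real_cond_exp M F (\<lambda>\<omega>. indicator {1} (X \<omega>))" by (simp add: p_def cprobF)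
  have pF: "p \<in> borel_measurable F" and pM[measurable]: "p \<in> borel_measurable M"
    unfolding pce by auto
  have ppos: "AE \<omega> in M. 0 < p \<omega> \<and> p \<omega> < 1" using positivity by (simp add: p_def)
  have pint: "integrable M p" unfolding pce
    by (intro S.real_cond_exp_int integrable_const_bound[where B=1]) (auto simp: indicator_def)
  have Xind: "\<And>\<omega>. \<omega> \<in> space M \<Longrightarrow> X \<omega> = indicator {1} (X \<omega>)"
    using binary by (auto simp: indicator_def)
  have Xbind: "\<And>\<omega>. \<omega> \<in> space M \<Longrightarrow> Xb \<omega> = indicator {1} (Xb \<omega>)"
    using binary_b by (auto simp: indicator_def)
  have one_F: "AE \<omega> in M. real_cond_exp M F (\<lambda>_. 1) \<omega> = 1"
    by (rule S.real_cond_exp_F_meas) auto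
  have p0: "AE \<omega> in M. cprob M N Z X {0} \<omega> = 1 - p \<omega>"
  proof -
    have "AE \<omega> in M. real_cond_exp M F (\<lambda>\<omega>. indicator {0} (X \<omega>)) \<omega> = real_cond_exp M F (\<lambda>\<omega>. 1 - indicator {1} (X \<omega>)) \<omega>"
      by (rule S.real_cond_exp_cong) (use binary in \<open>auto simp: indicator_def\<close>)
    moreover have "AE \<omega> in M. real_cond_exp M F (\<lambda>\<omega>. 1 - indicator {1} (X \<omega>)) \<omega> = real_cond_exp M F (\<lambda>_. 1) \<omega> - p \<omega>"
      unfolding pce by (rule S.real_cond_exp_diff) (auto intro!: integrable_const_bound[where B=1] simp: indicator_def)
    moreover note one_F
    ultimately show ?thesis unfolding cprobF by eventually_elim auto
  qed
  have q0: "AE \<omega> in M. cprob M N Z Xb {0} \<omega> = 1 - p \<omega>"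
    using Xb_dist p0 unfolding cond_same_dist_def by (auto dest!: bspec[of _ _ "{0}"])
  have q1: "AE \<omega> in M. cprob M N Z Xb {1} \<omega> = p \<omega>"
    using Xb_dist unfolding cond_same_dist_def p_def by (auto dest!: bspec[of _ _ "{1}"])
  have cvar_eq: "AE \<omega> in M. cvar M N Z X \<omega> = p \<omega> * (1 - p \<omega>)"
  proof -
    have cX: "AE \<omega> in M. real_cond_exp M F X \<omega> = p \<omega>"
      unfolding pce by (rule S.real_cond_exp_cong) (use Xind in \<open>auto\<close>)
    have a1: "AE \<omega> in M. real_cond_exp M F (\<lambda>\<omega>. (X \<omega> - real_cond_exp M F X \<omega>)\<^sup>2) \<omega>
        = real_cond_exp M F (\<lambda>\<omega>. (1 - 2 * p \<omega>) * X \<omega> + (p \<omega>)\<^sup>2) \<omega>"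
    proof (rule S.real_cond_exp_cong)
      show "AE \<omega> in M. (X \<omega> - real_cond_exp M F X \<omega>)\<^sup>2 = (1 - 2 * p \<omega>) * X \<omega> + (p \<omega>)\<^sup>2"
        using cX AE_space
      proof eventually_elim
        case (elim \<omega>)
        then have "X \<omega> = 0 \<or> X \<omega> = 1" using binary by auto
        then show ?case using elim by (auto simp: power2_eq_square algebra_simps)
      qed
    qed auto
    have i1: "integrable M (\<lambda>\<omega>. (1 - 2 * p \<omega>) * X \<omega>)"
    proof (rule Bochner_Integration.integrable_bound[where f="\<lambda>\<omega>. 1 + 2 * \<bar>p \<omega>\<bar>"])
      show "integrable M (\<lambda>\<omega>. 1 + 2 * \<bar>p \<omega>\<bar>)" using pint by auto
      show "AE \<omega> in M. norm ((1 - 2 * p \<omega>) * X \<omega>) \<le> norm (1 + 2 * \<bar>p \<omega>\<bar>)"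
      proof (rule AE_I2)
        fix \<omega> assume "\<omega> \<in> space M"
        then have "X \<omega> = 0 \<or> X \<omega> = 1" using binary by auto
        then show "norm ((1 - 2 * p \<omega>) * X \<omega>) \<le> norm (1 + 2 * \<bar>p \<omega>\<bar>)" by auto
      qed
    qed measurable
    have i2: "integrable M (\<lambda>\<omega>. (p \<omega>)\<^sup>2)"
    proof (rule Bochner_Integration.integrable_bound[where f="\<lambda>\<omega>. 1::real"])
      show "AE \<omega> in M. norm ((p \<omega>)\<^sup>2) \<le> norm (1::real)"
        using ppos by eventually_elim (auto simp: power_le_one)
    qed auto
    have a2: "AE \<omega> in M. real_cond_exp M F (\<lambda>\<omega>. (1 - 2 * p \<omega>) * X \<omega> + (p \<omega>)\<^sup>2) \<omega>
        = real_cond_exp M F (\<lambda>\<omega>. (1 - 2 * p \<omega>) * X \<omega>) \<omega> + real_cond_exp M F (\<lambda>\<omega>. (p \<omega>)\<^sup>2) \<omega>"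
      by (rule S.real_cond_exp_add[OF i1 i2])
    have a3: "AE \<omega> in M. real_cond_exp M F (\<lambda>\<omega>. (1 - 2 * p \<omega>) * X \<omega>) \<omega> = (1 - 2 * p \<omega>) * real_cond_exp M F X \<omega>"
      by (rule S.real_cond_exp_mult[OF _ _ i1]) (use pF in measurable)
    have a4: "AE \<omega> in M. real_cond_exp M F (\<lambda>\<omega>. (p \<omega>)\<^sup>2) \<omega> = (p \<omega>)\<^sup>2"
      by (rule S.real_cond_exp_F_meas[OF i2]) (use pF in measurable)
    show ?thesis using a1 a2 a3 a4 cX
      by eventually_elim (auto simp: cvar_def cexpF power2_eq_square algebra_simps)
  qed
  have Yint: "integrable M Y" using Ym Y_sq by (rule square_integrable_imp_integrable)
  have fXsq: "integrable M (\<lambda>\<omega>. (f0 (X \<omega>) (Z \<omega>))\<^sup>2)"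
  proof -
    have "integrable M (\<lambda>\<omega>. (real_cond_exp M G Y \<omega>)\<^sup>2)"
      by (rule cexp_sq_int[OF SG.sigma_finite_subalgebra_axioms P Ym Y_sq])
    then show ?thesis
      by (rule integrable_cong_AE[THEN iffD1, rotated -1]) (use f0reg f0c[OF Xm] in \<open>auto elim!: AE_mp\<close>)
  qed
  have fXm[measurable]: "(\<lambda>\<omega>. f0 (X \<omega>) (Z \<omega>)) \<in> borel_measurable M" by (rule f0c[OF Xm])
  have fXbm[measurable]: "(\<lambda>\<omega>. f0 (Xb \<omega>) (Z \<omega>)) \<in> borel_measurable M" by (rule f0c[OF Xbm])
  have fXint: "integrable M (\<lambda>\<omega>. f0 (X \<omega>) (Z \<omega>))"
    using fXm fXsq by (rule square_integrable_imp_integrable)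
  have f0Nm: "\<And>x. (\<lambda>z. f0 x z) \<in> borel_measurable N" by (rule f0N)
  have haF: "\<And>x. (\<lambda>\<omega>. f0 x (Z \<omega>)) \<in> borel_measurable F"
    using measurable_compose[OF ZF f0N] by auto
  have haG: "\<And>x. (\<lambda>\<omega>. f0 x (Z \<omega>)) \<in> borel_measurable G"
    using measurable_compose[OF ZG f0N] by auto
  have haM[measurable]: "\<And>x. (\<lambda>\<omega>. f0 x (Z \<omega>)) \<in> borel_measurable M"
    using measurable_compose[OF Zm f0N] by auto
  have ZFm: "(\<lambda>\<omega>. indicator C (Z \<omega>) :: real) \<in> borel_measurable F" if C: "C \<in> sets N" for C
    using ZF C by measurable
  have sqF: "\<And>A. A \<in> sets F \<Longrightarrow> \<exists>C\<in>sets N. A = Z -` C \<inter> space M"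
    unfolding F_def sigma_gen_def using sets_vimage_algebra2[of Z "space M" N] measurable_space[OF Zm] by auto

  have mu: "AE \<omega> in M. f0 a (Z \<omega>) = real_cond_exp M F (if a = 1 then Y1 else Y0) \<omega>" if a: "a \<in> {0, 1}" for a :: real
  proof -
    define Ya where "Ya = (if a = 1 then Y1 else Y0)"
    have Yam[measurable]: "Ya \<in> borel_measurable M" and Yai: "integrable M Ya"
      using Y0_int Y1_int by (auto simp: Ya_def)
    define pa where "pa = cprob M N Z X {a}"
    have pace: "pa = real_cond_exp M F (\<lambda>\<omega>. indicator {a} (X \<omega>))" by (simp add: pa_def cprobF)
    have paF: "pa \<in> borel_measurable F" and paM[measurable]: "pa \<in> borel_measurable M"
      unfolding pace by auto
    have papos: "AE \<omega> in M. 0 < pa \<omega> \<and> pa \<omega> < 1"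
      using a ppos p0 by (auto simp: pa_def p_def elim: AE_mp)
    define mu where "mu = real_cond_exp M F Ya"
    have muF: "mu \<in> borel_measurable F" and muM[measurable]: "mu \<in> borel_measurable M" and muint: "integrable M mu"
      unfolding mu_def using Yai by auto
    have int_haI: "integrable M (\<lambda>\<omega>. f0 a (Z \<omega>) * indicator {a} (X \<omega>))"
      by (rule Bochner_Integration.integrable_bound[OF fXint]) (auto simp: indicator_def intro!: AE_I2)
    have int_hap: "integrable M (\<lambda>\<omega>. f0 a (Z \<omega>) * pa \<omega>)"
      unfolding pace by (rule S.real_cond_exp_intg(1)[OF int_haI haF]) measurable
    have int_pmu: "integrable M (\<lambda>\<omega>. pa \<omega> * mu \<omega>)"
    proof (rule Bochner_Integration.integrable_bound[OF muint])
      show "AE \<omega> in M. norm (pa \<omega> * mu \<omega>) \<le> norm (mu \<omega>)"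
        using papos by eventually_elim (auto intro!: abs_mult_le1)
    qed measurable
    have key: "(\<integral>\<omega>. indicator C (Z \<omega>) * (pa \<omega> * mu \<omega>) \<partial>M) = (\<integral>\<omega>. indicator C (Z \<omega>) * (pa \<omega> * f0 a (Z \<omega>)) \<partial>M)"
      if C: "C \<in> sets N" for C
    proof -
      note [measurable] = C
      have "(\<integral>\<omega>. indicator C (Z \<omega>) * (pa \<omega> * mu \<omega>) \<partial>M) = (\<integral>\<omega>. (indicator C (Z \<omega>) * pa \<omega>) * mu \<omega> \<partial>M)"
        by (simp add: ac_simps)
      also have "\<dots> = (\<integral>\<omega>. (indicator C (Z \<omega>) * pa \<omega>) * Ya \<omega> \<partial>M)"
        unfolding mu_def
      proof (rule S.real_cond_exp_intg(2))
        show "integrable M (\<lambda>\<omega>. indicator C (Z \<omega>) * pa \<omega> * Ya \<omega>)"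
        proof (rule Bochner_Integration.integrable_bound[OF Yai])
          show "AE \<omega> in M. norm (indicator C (Z \<omega>) * pa \<omega> * Ya \<omega>) \<le> norm (Ya \<omega>)"
            using papos by eventually_elim (auto intro!: abs_mult_le1 simp: indicator_def)
        qed (use ZFm[OF C] in measurable)
      qed (use ZFm[OF C] paF in measurable)
      also have "\<dots> = (\<integral>\<omega>. (Ya \<omega> * indicator C (Z \<omega>)) * pa \<omega> \<partial>M)" by (simp add: ac_simps)
      also have "\<dots> = (\<integral>\<omega>. (Ya \<omega> * indicator C (Z \<omega>)) * indicator {a} (X \<omega>) \<partial>M)"
      proof -
        let ?g = "\<lambda>u::(real \<times> real) \<times> 'z. (if a = 1 then snd (fst u) else fst (fst u)) * indicator C (snd u)"
        have gm: "?g \<in> borel_measurable (borel \<Otimes>\<^sub>M N)"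
        proof (cases "a = 1")
          case True
          have "(\<lambda>u::(real \<times> real) \<times> 'z. snd (fst u) * indicator C (snd u)) \<in> borel_measurable (borel \<Otimes>\<^sub>M N)" by measurable
          then show ?thesis using True by simp
        next
          case False
          have "(\<lambda>u::(real \<times> real) \<times> 'z. fst (fst u) * indicator C (snd u)) \<in> borel_measurable (borel \<Otimes>\<^sub>M N)" by measurable
          then show ?thesis using False by simp
        qed
        have gi: "integrable M (\<lambda>\<omega>. ?g ((Y0 \<omega>, Y1 \<omega>), Z \<omega>) * indicator {a} (X \<omega>))"
          by (rule Bochner_Integration.integrable_bound[OF Yai]) (auto simp: Ya_def indicator_def intro!: AE_I2)
        have "(\<integral>\<omega>. ?g ((Y0 \<omega>, Y1 \<omega>), Z \<omega>) * indicator {a} (X \<omega>) \<partial>M) = (\<integral>\<omega>. ?g ((Y0 \<omega>, Y1 \<omega>), Z \<omega>) * cprob M N Z X {a} \<omega> \<partial>M)"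
          by (rule ci_int(2)[OF P Zm _ Xm ignorability _ gm gi]) auto
        then show ?thesis by (cases "a = 1") (simp_all add: Ya_def pa_def)
      qed
      also have "\<dots> = (\<integral>\<omega>. (indicator C (Z \<omega>) * indicator {a} (X \<omega>)) * Y \<omega> \<partial>M)"
        by (rule integral_cong_AE) (use consistency a in \<open>auto simp: Ya_def indicator_def elim!: eventually_mono\<close>)
      also have "\<dots> = (\<integral>\<omega>. (indicator C (Z \<omega>) * indicator {a} (X \<omega>)) * real_cond_exp M G Y \<omega> \<partial>M)"
      proof (rule SG.real_cond_exp_intg(2)[symmetric])
        show "integrable M (\<lambda>\<omega>. indicator C (Z \<omega>) * indicator {a} (X \<omega>) * Y \<omega>)"
          by (rule Bochner_Integration.integrable_bound[OF Yint]) (auto simp: indicator_def intro!: AE_I2)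
      qed (use ZG XG in measurable)
      also have "\<dots> = (\<integral>\<omega>. (indicator C (Z \<omega>) * f0 a (Z \<omega>)) * indicator {a} (X \<omega>) \<partial>M)"
        by (rule integral_cong_AE) (use f0reg in \<open>auto simp: indicator_def elim!: eventually_mono\<close>)
      also have "\<dots> = (\<integral>\<omega>. (indicator C (Z \<omega>) * f0 a (Z \<omega>)) * pa \<omega> \<partial>M)"
        unfolding pace
      proof (rule S.real_cond_exp_intg(2)[symmetric])
        show "integrable M (\<lambda>\<omega>. indicator C (Z \<omega>) * f0 a (Z \<omega>) * indicator {a} (X \<omega>))"
          by (rule Bochner_Integration.integrable_bound[OF int_haI]) (auto simp: indicator_def intro!: AE_I2)
      qed (use ZFm[OF C] haF in measurable)
      finally show ?thesis by (simp add: ac_simps)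
    qed
    have c1: "AE \<omega> in M. real_cond_exp M F (\<lambda>\<omega>. pa \<omega> * mu \<omega>) \<omega> = pa \<omega> * f0 a (Z \<omega>)"
    proof (rule S.real_cond_exp_charact)
      fix A assume "A \<in> sets F"
      then obtain C where C: "C \<in> sets N" and A: "A = Z -` C \<inter> space M" using sqF by blast
      have "(\<integral>\<omega>\<in>A. pa \<omega> * mu \<omega> \<partial>M) = (\<integral>\<omega>. indicator C (Z \<omega>) * (pa \<omega> * mu \<omega>) \<partial>M)"
        unfolding set_lebesgue_integral_def A by (intro Bochner_Integration.integral_cong) (auto simp: indicator_def)
      also have "\<dots> = (\<integral>\<omega>. indicator C (Z \<omega>) * (pa \<omega> * f0 a (Z \<omega>)) \<partial>M)" by (rule key[OF C])
      also have "\<dots> = (\<integral>\<omega>\<in>A. pa \<omega> * f0 a (Z \<omega>) \<partial>M)"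
        unfolding set_lebesgue_integral_def A by (intro Bochner_Integration.integral_cong) (auto simp: indicator_def)
      finally show "(\<integral>\<omega>\<in>A. pa \<omega> * mu \<omega> \<partial>M) = (\<integral>\<omega>\<in>A. pa \<omega> * f0 a (Z \<omega>) \<partial>M)" .
    next
      show "integrable M (\<lambda>\<omega>. pa \<omega> * mu \<omega>)" by (rule int_pmu)
      show "integrable M (\<lambda>\<omega>. pa \<omega> * f0 a (Z \<omega>))" using int_hap by (simp add: mult.commute)
      show "(\<lambda>\<omega>. pa \<omega> * f0 a (Z \<omega>)) \<in> borel_measurable F" using paF haF by measurable
    qed
    have c2: "AE \<omega> in M. real_cond_exp M F (\<lambda>\<omega>. pa \<omega> * mu \<omega>) \<omega> = pa \<omega> * mu \<omega>"
      by (rule S.real_cond_exp_F_meas[OF int_pmu]) (use paF muF in measurable)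
    show ?thesis using c1 c2 papos by eventually_elim (auto simp: mu_def Ya_def)
  qed
  have CIX: "cond_indep M N Z (borel :: (real \<times> real) measure) (\<lambda>\<omega>. (Y \<omega>, X \<omega>)) borel Xb"
    by (rule ci_sym[OF Xb_indep])
  have YXm: "(\<lambda>\<omega>. (Y \<omega>, X \<omega>)) \<in> measurable M (borel :: (real \<times> real) measure)" by measurable
  define R where "R = (\<lambda>\<omega>. Y \<omega> - f0 (X \<omega>) (Z \<omega>))"
  define k where "k = (\<lambda>\<omega>. f0 (X \<omega>) (Z \<omega>) - f0 (Xb \<omega>) (Z \<omega>))"
  define D where "D = (\<lambda>\<omega>. f0 1 (Z \<omega>) - f0 0 (Z \<omega>))"
  have Rm[measurable]: "R \<in> borel_measurable M" and km[measurable]: "k \<in> borel_measurable M"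
    and Dm[measurable]: "D \<in> borel_measurable M"
    unfolding R_def k_def D_def by measurable
  have Rsq: "integrable M (\<lambda>\<omega>. (R \<omega>)\<^sup>2)"
  proof (rule Bochner_Integration.integrable_bound[where f="\<lambda>\<omega>. 2 * (Y \<omega>)\<^sup>2 + 2 * (f0 (X \<omega>) (Z \<omega>))\<^sup>2"])
    show "integrable M (\<lambda>\<omega>. 2 * (Y \<omega>)\<^sup>2 + 2 * (f0 (X \<omega>) (Z \<omega>))\<^sup>2)"
      using Y_sq fXsq by auto
    show "AE \<omega> in M. norm ((R \<omega>)\<^sup>2) \<le> norm (2 * (Y \<omega>)\<^sup>2 + 2 * (f0 (X \<omega>) (Z \<omega>))\<^sup>2)"
      by (intro AE_I2) (simp add: R_def sq_ineq1)
  qed measurable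
  have fXbsq: "integrable M (\<lambda>\<omega>. (f0 (Xb \<omega>) (Z \<omega>))\<^sup>2)"
  proof (rule Bochner_Integration.integrable_bound[where f="\<lambda>\<omega>. 2 * (Y \<omega>)\<^sup>2 + 2 * (Y \<omega> - f0 (Xb \<omega>) (Z \<omega>))\<^sup>2"])
    show "integrable M (\<lambda>\<omega>. 2 * (Y \<omega>)\<^sup>2 + 2 * (Y \<omega> - f0 (Xb \<omega>) (Z \<omega>))\<^sup>2)"
      using Y_sq e_cond_finite by auto
    show "AE \<omega> in M. norm ((f0 (Xb \<omega>) (Z \<omega>))\<^sup>2) \<le> norm (2 * (Y \<omega>)\<^sup>2 + 2 * (Y \<omega> - f0 (Xb \<omega>) (Z \<omega>))\<^sup>2)"
    proof (rule AE_I2)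
      fix \<omega> show "norm ((f0 (Xb \<omega>) (Z \<omega>))\<^sup>2) \<le> norm (2 * (Y \<omega>)\<^sup>2 + 2 * (Y \<omega> - f0 (Xb \<omega>) (Z \<omega>))\<^sup>2)"
        using sq_ineq1[of "Y \<omega>" "Y \<omega> - f0 (Xb \<omega>) (Z \<omega>)"] by simp
    qed
  qed measurable
  have ksq: "integrable M (\<lambda>\<omega>. (k \<omega>)\<^sup>2)"
  proof (rule Bochner_Integration.integrable_bound[where f="\<lambda>\<omega>. 2 * (f0 (X \<omega>) (Z \<omega>))\<^sup>2 + 2 * (f0 (Xb \<omega>) (Z \<omega>))\<^sup>2"])
    show "integrable M (\<lambda>\<omega>. 2 * (f0 (X \<omega>) (Z \<omega>))\<^sup>2 + 2 * (f0 (Xb \<omega>) (Z \<omega>))\<^sup>2)"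
      using fXsq fXbsq by auto
    show "AE \<omega> in M. norm ((k \<omega>)\<^sup>2) \<le> norm (2 * (f0 (X \<omega>) (Z \<omega>))\<^sup>2 + 2 * (f0 (Xb \<omega>) (Z \<omega>))\<^sup>2)"
      by (intro AE_I2) (simp add: k_def sq_ineq1)
  qed measurable
  have Rk: "integrable M (\<lambda>\<omega>. R \<omega> * k \<omega>)"
  proof (rule Bochner_Integration.integrable_bound[where f="\<lambda>\<omega>. (R \<omega>)\<^sup>2 + (k \<omega>)\<^sup>2"])
    show "integrable M (\<lambda>\<omega>. (R \<omega>)\<^sup>2 + (k \<omega>)\<^sup>2)" using Rsq ksq by auto
    show "AE \<omega> in M. norm (R \<omega> * k \<omega>) \<le> norm ((R \<omega>)\<^sup>2 + (k \<omega>)\<^sup>2)"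
      using ab_ineq by (intro AE_I2) simp
  qed measurable
  have f0snd[measurable]: "(\<lambda>u::(real \<times> real) \<times> 'z. f0 x (snd u)) \<in> borel_measurable (borel \<Otimes>\<^sub>M N)" for x
    using measurable_compose[OF measurable_snd f0N] by simp
  have f0pair[measurable]: "(\<lambda>u::(real \<times> real) \<times> 'z. f0 (snd (fst u)) (snd u)) \<in> borel_measurable (borel \<Otimes>\<^sub>M N)"
  proof -
    have "(\<lambda>u::(real \<times> real) \<times> 'z. (snd (fst u), snd u)) \<in> measurable (borel \<Otimes>\<^sub>M N) (borel \<Otimes>\<^sub>M N)" by measurable
    from measurable_compose[OF this f0m] show ?thesis by simp
  qed

  have blk: "(\<integral>\<omega>. indicator {a} (X \<omega>) * (D \<omega>)\<^sup>2 * indicator {b} (Xb \<omega>) \<partial>M) = (\<integral>\<omega>. p \<omega> * (1 - p \<omega>) * (D \<omega>)\<^sup>2 \<partial>M)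
       \<and> (\<integral>\<omega>. R \<omega> * indicator {a} (X \<omega>) * D \<omega> * indicator {b} (Xb \<omega>) \<partial>M) = 0"
    if ab: "(a = 1 \<and> b = 0) \<or> (a = 0 \<and> b = (1::real))" for a b :: real
  proof -
    define pa where "pa = cprob M N Z X {a}"
    define qb where "qb = cprob M N Z Xb {b}"
    have pace: "pa = real_cond_exp M F (\<lambda>\<omega>. indicator {a} (X \<omega>))" by (simp add: pa_def cprobF)
    have paF: "pa \<in> borel_measurable F" and paM[measurable]: "pa \<in> borel_measurable M"
      unfolding pace by auto
    have qbF: "qb \<in> borel_measurable F" and qbM[measurable]: "qb \<in> borel_measurable M"
      unfolding qb_def cprobF by auto
    have pq: "AE \<omega> in M. qb \<omega> = 1 - pa \<omega> \<and> 0 < pa \<omega> \<and> pa \<omega> < 1 \<and> pa \<omega> * (1 - pa \<omega>) = p \<omega> * (1 - p \<omega>)"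
      using ab
    proof
      assume "a = 1 \<and> b = 0"
      then have a1: "a = 1" and b0: "b = 0" by auto
      show ?thesis using q0 ppos unfolding pa_def qb_def p_def a1 b0 by eventually_elim auto
    next
      assume "a = 0 \<and> b = 1"
      then have a0: "a = 0" and b1: "b = 1" by auto
      show ?thesis using q1 p0 ppos unfolding pa_def qb_def a0 b1
      proof eventually_elim
        case (elim \<omega>)
        show ?case using elim(3) by (simp add: elim(1) elim(2) algebra_simps)
      qed
    qed
    have kD: "indicator {a} (X \<omega>) * indicator {b} (Xb \<omega>) * (k \<omega>)\<^sup>2 = indicator {a} (X \<omega>) * indicator {b} (Xb \<omega>) * (D \<omega>)\<^sup>2"
      if "\<omega> \<in> space M" for \<omega>
      using ab by (auto simp: indicator_def k_def D_def power2_commute)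
    have kD2: "indicator {a} (X \<omega>) * indicator {b} (Xb \<omega>) * \<bar>k \<omega>\<bar> = indicator {a} (X \<omega>) * indicator {b} (Xb \<omega>) * \<bar>D \<omega>\<bar>"
      if "\<omega> \<in> space M" for \<omega>
      using ab by (auto simp: indicator_def k_def D_def abs_minus_commute)
    let ?g1 = "\<lambda>u::(real \<times> real) \<times> 'z. indicator {a} (snd (fst u)) * (f0 1 (snd u) - f0 0 (snd u))\<^sup>2"
    have g1m: "?g1 \<in> borel_measurable (borel \<Otimes>\<^sub>M N)" by measurable
    have gi1: "integrable M (\<lambda>\<omega>. ?g1 ((Y \<omega>, X \<omega>), Z \<omega>) * indicator {b} (Xb \<omega>))"
    proof (rule Bochner_Integration.integrable_bound[OF ksq])
      show "AE \<omega> in M. norm (?g1 ((Y \<omega>, X \<omega>), Z \<omega>) * indicator {b} (Xb \<omega>)) \<le> norm ((k \<omega>)\<^sup>2)"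
      proof (rule AE_I2)
        fix \<omega> assume w: "\<omega> \<in> space M"
        have "?g1 ((Y \<omega>, X \<omega>), Z \<omega>) * indicator {b} (Xb \<omega>) = indicator {a} (X \<omega>) * indicator {b} (Xb \<omega>) * (D \<omega>)\<^sup>2"
          by (simp add: D_def ac_simps)
        also have "\<dots> = indicator {a} (X \<omega>) * indicator {b} (Xb \<omega>) * (k \<omega>)\<^sup>2"
          by (rule kD[OF w, symmetric])
        finally have "?g1 ((Y \<omega>, X \<omega>), Z \<omega>) * indicator {b} (Xb \<omega>) = indicator {a} (X \<omega>) * indicator {b} (Xb \<omega>) * (k \<omega>)\<^sup>2" .
        then show "norm (?g1 ((Y \<omega>, X \<omega>), Z \<omega>) * indicator {b} (Xb \<omega>)) \<le> norm ((k \<omega>)\<^sup>2)"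
          by (simp add: indicator_def)
      qed
    qed measurable
    note ci1 = ci_int[OF P Zm YXm Xbm CIX _ g1m gi1]
    have int1: "integrable M (\<lambda>\<omega>. indicator {a} (X \<omega>) * (D \<omega>)\<^sup>2 * qb \<omega>)"
      using ci1(1) by (simp add: D_def qb_def)
    have "(\<integral>\<omega>. indicator {a} (X \<omega>) * (D \<omega>)\<^sup>2 * indicator {b} (Xb \<omega>) \<partial>M)
        = (\<integral>\<omega>. indicator {a} (X \<omega>) * (D \<omega>)\<^sup>2 * qb \<omega> \<partial>M)"
      using ci1(2) by (simp add: D_def qb_def)
    also have "\<dots> = (\<integral>\<omega>. ((D \<omega>)\<^sup>2 * (1 - pa \<omega>)) * indicator {a} (X \<omega>) \<partial>M)"
      by (rule integral_cong_AE) (use pq in \<open>auto elim!: eventually_mono\<close>)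
    also have "\<dots> = (\<integral>\<omega>. ((D \<omega>)\<^sup>2 * (1 - pa \<omega>)) * pa \<omega> \<partial>M)"
      unfolding pace
    proof (rule S.real_cond_exp_intg(2)[symmetric])
      show "integrable M (\<lambda>\<omega>. (D \<omega>)\<^sup>2 * (1 - real_cond_exp M F (\<lambda>\<omega>. indicator {a} (X \<omega>)) \<omega>) * indicator {a} (X \<omega>))"
        using int1 by (rule integrable_cong_AE[THEN iffD1, rotated -1]) (use pq in \<open>auto elim!: eventually_mono simp: pace\<close>)
      show "(\<lambda>\<omega>. (D \<omega>)\<^sup>2 * (1 - real_cond_exp M F (\<lambda>\<omega>. indicator {a} (X \<omega>)) \<omega>)) \<in> borel_measurable F"
        unfolding D_def using haF by measurable
    qed measurable
    also have "\<dots> = (\<integral>\<omega>. p \<omega> * (1 - p \<omega>) * (D \<omega>)\<^sup>2 \<partial>M)"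
    proof (rule integral_cong_AE)
      show "AE \<omega> in M. (D \<omega>)\<^sup>2 * (1 - pa \<omega>) * pa \<omega> = p \<omega> * (1 - p \<omega>) * (D \<omega>)\<^sup>2"
        using pq by eventually_elim (rule swap_lem, simp)
    qed measurable
    finally have part1: "(\<integral>\<omega>. indicator {a} (X \<omega>) * (D \<omega>)\<^sup>2 * indicator {b} (Xb \<omega>) \<partial>M) = (\<integral>\<omega>. p \<omega> * (1 - p \<omega>) * (D \<omega>)\<^sup>2 \<partial>M)" .
    let ?g2 = "\<lambda>u::(real \<times> real) \<times> 'z. (fst (fst u) - f0 (snd (fst u)) (snd u)) * indicator {a} (snd (fst u)) * (f0 1 (snd u) - f0 0 (snd u))"
    have g2m: "?g2 \<in> borel_measurable (borel \<Otimes>\<^sub>M N)" by measurable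
    have gi2: "integrable M (\<lambda>\<omega>. ?g2 ((Y \<omega>, X \<omega>), Z \<omega>) * indicator {b} (Xb \<omega>))"
    proof (rule Bochner_Integration.integrable_bound[OF Rk])
      show "AE \<omega> in M. norm (?g2 ((Y \<omega>, X \<omega>), Z \<omega>) * indicator {b} (Xb \<omega>)) \<le> norm (R \<omega> * k \<omega>)"
      proof (rule AE_I2)
        fix \<omega> assume w: "\<omega> \<in> space M"
        have "norm (?g2 ((Y \<omega>, X \<omega>), Z \<omega>) * indicator {b} (Xb \<omega>)) = \<bar>R \<omega>\<bar> * (indicator {a} (X \<omega>) * indicator {b} (Xb \<omega>) * \<bar>D \<omega>\<bar>)"
          by (simp add: R_def D_def abs_mult indicator_def)
        also have "\<dots> = \<bar>R \<omega>\<bar> * (indicator {a} (X \<omega>) * indicator {b} (Xb \<omega>) * \<bar>k \<omega>\<bar>)"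
          by (simp only: kD2[OF w])
        also have "\<dots> \<le> norm (R \<omega> * k \<omega>)"
          by (auto simp: indicator_def abs_mult)
        finally show "norm (?g2 ((Y \<omega>, X \<omega>), Z \<omega>) * indicator {b} (Xb \<omega>)) \<le> norm (R \<omega> * k \<omega>)" .
      qed
    qed measurable
    note ci2 = ci_int[OF P Zm YXm Xbm CIX _ g2m gi2]
    define w where "w = (\<lambda>\<omega>. indicator {a} (X \<omega>) * D \<omega> * qb \<omega>)"
    have wG: "w \<in> borel_measurable G" unfolding w_def D_def using XG haG FG[OF qbF] by measurable
    have wM[measurable]: "w \<in> borel_measurable M" unfolding w_def by measurable
    have qb01: "AE \<omega> in M. 0 \<le> qb \<omega> \<and> qb \<omega> \<le> 1" using pq by eventually_elim auto
    have wbound: "integrable M (\<lambda>\<omega>. w \<omega> * V \<omega>)"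
      if Vm: "V \<in> borel_measurable M" and Vsq: "integrable M (\<lambda>\<omega>. (V \<omega>)\<^sup>2)" for V
    proof (rule Bochner_Integration.integrable_bound[where f="\<lambda>\<omega>. (V \<omega>)\<^sup>2 + indicator {a} (X \<omega>) * (D \<omega>)\<^sup>2 * qb \<omega>"])
      show "integrable M (\<lambda>\<omega>. (V \<omega>)\<^sup>2 + indicator {a} (X \<omega>) * (D \<omega>)\<^sup>2 * qb \<omega>)"
        using Vsq int1 by auto
      show "AE \<omega> in M. norm (w \<omega> * V \<omega>) \<le> norm ((V \<omega>)\<^sup>2 + indicator {a} (X \<omega>) * (D \<omega>)\<^sup>2 * qb \<omega>)"
        using qb01
      proof eventually_elim
        case (elim \<omega>)
        have i: "indicator {a} (X \<omega>) \<in> {0, 1::real}" by (auto simp: indicator_def)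
        have "\<bar>V \<omega> * (indicator {a} (X \<omega>) * D \<omega> * qb \<omega>)\<bar> \<le> (V \<omega>)\<^sup>2 + indicator {a} (X \<omega>) * (D \<omega>)\<^sup>2 * qb \<omega>"
          using yw_ineq[of "qb \<omega>" "indicator {a} (X \<omega>)" "V \<omega>" "D \<omega>"] elim i by auto
        then show ?case by (simp add: w_def mult.commute)
      qed
    qed (use Vm in measurable)
    have wY: "integrable M (\<lambda>\<omega>. w \<omega> * Y \<omega>)" by (rule wbound[OF Ym Y_sq])
    have wfX: "integrable M (\<lambda>\<omega>. w \<omega> * f0 (X \<omega>) (Z \<omega>))" by (rule wbound[OF fXm fXsq])
    have "(\<integral>\<omega>. w \<omega> * Y \<omega> \<partial>M) = (\<integral>\<omega>. w \<omega> * real_cond_exp M G Y \<omega> \<partial>M)"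
      by (rule SG.real_cond_exp_intg(2)[symmetric, OF wY wG Ym])
    also have "\<dots> = (\<integral>\<omega>. w \<omega> * f0 (X \<omega>) (Z \<omega>) \<partial>M)"
      by (rule integral_cong_AE) (use f0reg in \<open>auto elim!: eventually_mono\<close>)
    finally have wYeq: "(\<integral>\<omega>. w \<omega> * Y \<omega> \<partial>M) = (\<integral>\<omega>. w \<omega> * f0 (X \<omega>) (Z \<omega>) \<partial>M)" .
    have "(\<integral>\<omega>. R \<omega> * indicator {a} (X \<omega>) * D \<omega> * indicator {b} (Xb \<omega>) \<partial>M)
        = (\<integral>\<omega>. ?g2 ((Y \<omega>, X \<omega>), Z \<omega>) * indicator {b} (Xb \<omega>) \<partial>M)"
      by (simp add: R_def D_def)
    also have "\<dots> = (\<integral>\<omega>. ?g2 ((Y \<omega>, X \<omega>), Z \<omega>) * qb \<omega> \<partial>M)"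
      using ci2(2) by (simp add: qb_def)
    also have "\<dots> = (\<integral>\<omega>. w \<omega> * Y \<omega> - w \<omega> * f0 (X \<omega>) (Z \<omega>) \<partial>M)"
      by (simp add: w_def D_def algebra_simps)
    also have "\<dots> = 0"
      using wYeq wY wfX by simp
    finally show ?thesis using part1 by simp
  qed
  note b10 = blk[of 1 0] and b01 = blk[of 0 1]
  have bin2: "(X \<omega> = 0 \<or> X \<omega> = 1) \<and> (Xb \<omega> = 0 \<or> Xb \<omega> = 1)" if "\<omega> \<in> space M" for \<omega>
    using binary binary_b that by auto
  define A where "A = (\<lambda>\<omega>. R \<omega> * indicator {1} (X \<omega>) * D \<omega> * indicator {0} (Xb \<omega>) :: real)"
  define B where "B = (\<lambda>\<omega>. R \<omega> * indicator {0} (X \<omega>) * D \<omega> * indicator {1} (Xb \<omega>) :: real)"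
  define C where "C = (\<lambda>\<omega>. indicator {1} (X \<omega>) * (D \<omega>)\<^sup>2 * indicator {0} (Xb \<omega>) :: real)"
  define E where "E = (\<lambda>\<omega>. indicator {0} (X \<omega>) * (D \<omega>)\<^sup>2 * indicator {1} (Xb \<omega>) :: real)"
  have dec1: "R \<omega> * k \<omega> = A \<omega> - B \<omega>" and dec2: "(k \<omega>)\<^sup>2 = C \<omega> + E \<omega>"
    and bA: "\<bar>A \<omega>\<bar> \<le> \<bar>R \<omega> * k \<omega>\<bar>" and bB: "\<bar>B \<omega>\<bar> \<le> \<bar>R \<omega> * k \<omega>\<bar>"
    and bC: "\<bar>C \<omega>\<bar> \<le> (k \<omega>)\<^sup>2" and bE: "\<bar>E \<omega>\<bar> \<le> (k \<omega>)\<^sup>2"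
    if w: "\<omega> \<in> space M" for \<omega>
    using bin2[OF w]
    by (auto simp: A_def B_def C_def E_def k_def D_def indicator_def power2_commute abs_mult right_diff_distrib)
  have Am[measurable]: "A \<in> borel_measurable M" and Bm[measurable]: "B \<in> borel_measurable M"
    and Cm[measurable]: "C \<in> borel_measurable M" and Em[measurable]: "E \<in> borel_measurable M"
    unfolding A_def B_def C_def E_def by measurable
  have Ai: "integrable M A" by (rule Bochner_Integration.integrable_bound[OF Rk Am]) (auto intro!: AE_I2 bA)
  have Bi: "integrable M B" by (rule Bochner_Integration.integrable_bound[OF Rk Bm]) (auto intro!: AE_I2 bB)
  have Ci: "integrable M C" by (rule Bochner_Integration.integrable_bound[OF ksq Cm]) (auto intro!: AE_I2 bC)
  have Ei: "integrable M E" by (rule Bochner_Integration.integrable_bound[OF ksq Em]) (auto intro!: AE_I2 bE)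
  have Rk0: "(\<integral>\<omega>. R \<omega> * k \<omega> \<partial>M) = 0"
  proof -
    have "(\<integral>\<omega>. R \<omega> * k \<omega> \<partial>M) = (\<integral>\<omega>. A \<omega> - B \<omega> \<partial>M)"
      by (intro Bochner_Integration.integral_cong) (auto simp: dec1)
    also have "\<dots> = (\<integral>\<omega>. A \<omega> \<partial>M) - (\<integral>\<omega>. B \<omega> \<partial>M)" using Ai Bi by simp
    also have "\<dots> = 0" using b10 b01 by (simp add: A_def B_def)
    finally show ?thesis .
  qed
  have ksq2: "(\<integral>\<omega>. (k \<omega>)\<^sup>2 \<partial>M) = 2 * (\<integral>\<omega>. p \<omega> * (1 - p \<omega>) * (D \<omega>)\<^sup>2 \<partial>M)"
  proof -
    have "(\<integral>\<omega>. (k \<omega>)\<^sup>2 \<partial>M) = (\<integral>\<omega>. C \<omega> + E \<omega> \<partial>M)"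
      by (intro Bochner_Integration.integral_cong) (auto simp: dec2)
    also have "\<dots> = (\<integral>\<omega>. C \<omega> \<partial>M) + (\<integral>\<omega>. E \<omega> \<partial>M)" using Ci Ei by simp
    also have "\<dots> = 2 * (\<integral>\<omega>. p \<omega> * (1 - p \<omega>) * (D \<omega>)\<^sup>2 \<partial>M)" using b10 b01 by (simp add: C_def E_def)
    finally show ?thesis .
  qed
  have lhs: "(\<integral>\<omega>. (Y \<omega> - f0 (Xb \<omega>) (Z \<omega>))\<^sup>2 \<partial>M) = (\<integral>\<omega>. (R \<omega>)\<^sup>2 \<partial>M) + 2 * (\<integral>\<omega>. R \<omega> * k \<omega> \<partial>M) + (\<integral>\<omega>. (k \<omega>)\<^sup>2 \<partial>M)"
  proof -
    have "(\<integral>\<omega>. (Y \<omega> - f0 (Xb \<omega>) (Z \<omega>))\<^sup>2 \<partial>M) = (\<integral>\<omega>. ((R \<omega>)\<^sup>2 + 2 * (R \<omega> * k \<omega>)) + (k \<omega>)\<^sup>2 \<partial>M)"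
      by (intro Bochner_Integration.integral_cong) (auto simp: R_def k_def power2_eq_square algebra_simps)
    also have "\<dots> = (\<integral>\<omega>. (R \<omega>)\<^sup>2 + 2 * (R \<omega> * k \<omega>) \<partial>M) + (\<integral>\<omega>. (k \<omega>)\<^sup>2 \<partial>M)"
      using Rsq Rk ksq by (intro Bochner_Integration.integral_add) auto
    also have "(\<integral>\<omega>. (R \<omega>)\<^sup>2 + 2 * (R \<omega> * k \<omega>) \<partial>M) = (\<integral>\<omega>. (R \<omega>)\<^sup>2 \<partial>M) + 2 * (\<integral>\<omega>. R \<omega> * k \<omega> \<partial>M)"
      using Rsq Rk by simp
    finally show ?thesis .
  qed
  have orig: "(\<integral>\<omega>. (Y \<omega> - f0 (X \<omega>) (Z \<omega>))\<^sup>2 \<partial>M) = (\<integral>\<omega>. (R \<omega>)\<^sup>2 \<partial>M)"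
    by (simp add: R_def)
  have rhs: "(\<integral>\<omega>. cvar M N Z X \<omega> * (cexp M N Z Y1 \<omega> - cexp M N Z Y0 \<omega>)\<^sup>2 \<partial>M)
      = (\<integral>\<omega>. p \<omega> * (1 - p \<omega>) * (D \<omega>)\<^sup>2 \<partial>M)"
  proof (rule integral_cong_AE)
    show "AE \<omega> in M. cvar M N Z X \<omega> * (cexp M N Z Y1 \<omega> - cexp M N Z Y0 \<omega>)\<^sup>2 = p \<omega> * (1 - p \<omega>) * (D \<omega>)\<^sup>2"
    proof -
      have m1: "AE \<omega> in M. f0 1 (Z \<omega>) = real_cond_exp M F Y1 \<omega>" using mu[of 1] by simp
      have m0: "AE \<omega> in M. f0 0 (Z \<omega>) = real_cond_exp M F Y0 \<omega>" using mu[of 0] by simp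
      show ?thesis using cvar_eq m1 m0 by eventually_elim (simp add: D_def cexpF)
    qed
    show "(\<lambda>\<omega>. cvar M N Z X \<omega> * (cexp M N Z Y1 \<omega> - cexp M N Z Y0 \<omega>)\<^sup>2) \<in> borel_measurable M"
      unfolding cvar_def cexpF by measurable
  qed measurable
  show ?thesis unfolding lhs orig rhs Rk0 ksq2 by simp
qed

end
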